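(* Let $X$ be a metric space and $Y$ be a uniformly locally finite metric space. Every uniformly finite-to-one coarse quotient map $f:X\to Y$ is uniformly coarsely finite-to-one, i.e. coarsely $n$-to-1 for some $n\in\mathbb N$.
   Context: U.l.f.: for every $r>0$, $\sup_{y}|B(y,r)|<\infty$. $f$ is uniformly finite-to-one if $\sup_{y\in Y}|f^{-1}(y)|<\infty$. Coarse quotient: $f$ is coarse ($\sup\{\partial(f(x),f(y)):d(x,y)\le t\}<\infty$ for all $t$) and there is $K>0$ such that for every $\varepsilon>0$ there is $\delta>0$ with $B(f(x),\varepsilon)\subset f(B(x,\delta))^K$ for all $x$ (closed balls, $A^K=\{y:\partial(y,A)\le K\}$). For $n\in\mathbb N$, $f$ is coarsely $n$-to-1 if for each $s>0$ there is $r>0$ such that for every $B\subset Y$ with $\mathrm{diam}(B)\le s$ there are $A_1,\dots,A_n\subset X$ with $\mathrm{diam}(A_i)\le r$ and $f^{-1}(B)\subset\bigcup_{i=1}^nA_i$. *)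

theory Defs
  imports "HOL-Analysis.Analysis"
begin

definition unif_locally_finite :: "'b::metric_space set \<Rightarrow> bool" where
  "unif_locally_finite (Y::'b set) \<longleftrightarrow>
     (\<forall>r>0. \<exists>N::nat. \<forall>y::'b. finite (cball y r) \<and> card (cball y r) \<le> N)"

definition unif_finite_to_one :: "('a \<Rightarrow> 'b) \<Rightarrow> bool" where
  "unif_finite_to_one f \<longleftrightarrow> (\<exists>N::nat. \<forall>y. finite (f -` {y}) \<and> card (f -` {y}) \<le> N)"

definition coarse_map :: "('a::metric_space \<Rightarrow> 'b::metric_space) \<Rightarrow> bool" where
  "coarse_map f \<longleftrightarrow> (\<forall>t. \<exists>S. \<forall>x y. dist x y \<le> t \<longrightarrow> dist (f x) (f y) \<le> S)"

definition thicken :: "'b::metric_space set \<Rightarrow> real \<Rightarrow> 'b set" where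
  "thicken A K = {y. infdist y A \<le> K}"

definition coarse_quotient :: "('a::metric_space \<Rightarrow> 'b::metric_space) \<Rightarrow> bool" where
  "coarse_quotient f \<longleftrightarrow> coarse_map f \<and>
     (\<exists>K>0. \<forall>\<epsilon>>0. \<exists>\<delta>>0. \<forall>x. cball (f x) \<epsilon> \<subseteq> thicken (f ` cball x \<delta>) K)"

text \<open>diam A \<le> s, written out (also meaningful for empty or unbounded A).\<close>
definition diam_le :: "'a::metric_space set \<Rightarrow> real \<Rightarrow> bool" where
  "diam_le A s \<longleftrightarrow> (\<forall>x\<in>A. \<forall>y\<in>A. dist x y \<le> s)"

definition coarsely_n_to_1 :: "('a::metric_space \<Rightarrow> 'b::metric_space) \<Rightarrow> nat \<Rightarrow> bool" where
  "coarsely_n_to_1 f n \<longleftrightarrow>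
     (\<forall>s>0. \<exists>r>0. \<forall>B. diam_le B s \<longrightarrow>
        (\<exists>A::nat \<Rightarrow> 'a set. (\<forall>i<n. diam_le (A i) r) \<and> f -` B \<subseteq> (\<Union>i<n. A i)))"

end

theory Submission
  imports Defs
begin

lemma infdist_lt_ex:
  fixes x :: "'b::metric_space"
  assumes "A \<noteq> {}" "infdist x A < e"
  shows "\<exists>a\<in>A. dist x a < e"
proof -
  have "(INF a\<in>A. dist x a) < e" using assms infdist_notempty by metis
  moreover have "bdd_below ((\<lambda>a. dist x a) ` A)" by (auto intro: bdd_belowI[of _ 0])
  ultimately show ?thesis using assms(1) by (meson cINF_less_iff)
qed

theorem proposition3p3:
  fixes f :: "'a::metric_space \<Rightarrow> 'b::metric_space"
  assumes "unif_locally_finite (UNIV :: 'b set)"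
    and "unif_finite_to_one f"
    and "coarse_quotient f"
  shows "\<exists>n::nat. coarsely_n_to_1 f n"
proof -
  obtain N where N: "\<And>y. finite (f -` {y}) \<and> card (f -` {y}) \<le> N"
    using assms(2) unfolding unif_finite_to_one_def by blast
  obtain K where K: "K > 0" "\<And>\<epsilon>. \<epsilon> > 0 \<Longrightarrow> \<exists>\<delta>>0. \<forall>x. cball (f x) \<epsilon> \<subseteq> thicken (f ` cball x \<delta>) K"
    using assms(3) unfolding coarse_quotient_def by blast
  obtain M where M: "\<And>y::'b. finite (cball y (K+1)) \<and> card (cball y (K+1)) \<le> M"
  proof -
    have "K + 1 > 0" using K(1) by simp
    then obtain M0 :: nat where "\<forall>y::'b. finite (cball y (K+1)) \<and> card (cball y (K+1)) \<le> M0"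
      using assms(1) unfolding unif_locally_finite_def by blast
    then show ?thesis using that by (metis (no_types))
  qed
  have Pfin: "finite (f -` cball y (K+1))" and Pcard: "card (f -` cball y (K+1)) \<le> M * N" for y
  proof -
    have eq: "f -` cball y (K+1) = (\<Union>z\<in>cball y (K+1). f -` {z})" by auto
    show "finite (f -` cball y (K+1))" unfolding eq using M N by (intro finite_UN_I) auto
    have "card (f -` cball y (K+1)) \<le> (\<Sum>z\<in>cball y (K+1). card (f -` {z}))"
      unfolding eq using M by (intro card_UN_le) auto
    also have "\<dots> \<le> card (cball y (K+1)) * N" using N sum_bounded_above[of "cball y (K+1)" "\<lambda>z. card (f -` {z})" N]
      by auto
    also have "\<dots> \<le> M * N" using M by auto
    finally show "card (f -` cball y (K+1)) \<le> M * N" .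
  qed
  have "coarsely_n_to_1 f (M * N)"
    unfolding coarsely_n_to_1_def
  proof (intro allI impI)
    fix s :: real assume s: "s > 0"
    obtain \<delta> where d: "\<delta> > 0" "\<And>x. cball (f x) s \<subseteq> thicken (f ` cball x \<delta>) K"
      using K(2)[OF s] by blast
    show "\<exists>r>0. \<forall>B. diam_le B s \<longrightarrow> (\<exists>A::nat \<Rightarrow> 'a set. (\<forall>i<M * N. diam_le (A i) r) \<and> f -` B \<subseteq> (\<Union>i<M * N. A i))"
    proof (intro exI[of _ "2*\<delta>"] conjI allI impI)
      show "2 * \<delta> > 0" using d by simp
      fix B :: "'b set" assume B: "diam_le B s"
      show "\<exists>A::nat \<Rightarrow> 'a set. (\<forall>i<M * N. diam_le (A i) (2*\<delta>)) \<and> f -` B \<subseteq> (\<Union>i<M * N. A i)"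
      proof (cases "f -` B = {}")
        case True
        then show ?thesis by (intro exI[of _ "\<lambda>_. {}"]) (auto simp: diam_le_def)
      next
        case False
        then obtain x0 where x0: "f x0 \<in> B" by auto
        define P where "P = f -` cball (f x0) (K+1)"
        obtain h where h: "bij_betw h {0..<card P} P"
          using ex_bij_betw_nat_finite[OF Pfin[of "f x0"]] unfolding P_def by blast
        have cP: "card P \<le> M * N" unfolding P_def by (rule Pcard)
        show ?thesis
        proof (intro exI[of _ "\<lambda>i. cball (h i) \<delta>"] conjI allI impI)
          fix i assume "i < M * N"
          show "diam_le (cball (h i) \<delta>) (2*\<delta>)" unfolding diam_le_def
          proof (intro ballI)
            fix u v assume "u \<in> cball (h i) \<delta>" "v \<in> cball (h i) \<delta>"
            then have "dist (h i) u \<le> \<delta>" "dist (h i) v \<le> \<delta>" by simp_all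
            then show "dist u v \<le> 2 * \<delta>" using dist_triangle3[of u v "h i"] by linarith
          qed
        next
          show "f -` B \<subseteq> (\<Union>i<M * N. cball (h i) \<delta>)"
          proof
            fix x assume "x \<in> f -` B"
            then have "dist (f x) (f x0) \<le> s" using B x0 unfolding diam_le_def by auto
            then have "f x0 \<in> cball (f x) s" by simp
            then have "f x0 \<in> thicken (f ` cball x \<delta>) K" using d(2)[of x] by blast
            then have "infdist (f x0) (f ` cball x \<delta>) < K + 1" unfolding thicken_def by auto
            moreover have "f ` cball x \<delta> \<noteq> {}" using d(1) by auto
            ultimately obtain x' where x': "x' \<in> cball x \<delta>" "dist (f x0) (f x') < K + 1"
              using infdist_lt_ex[of "f ` cball x \<delta>" "f x0" "K+1"] by auto
            then have "x' \<in> P" unfolding P_def by auto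
            moreover have "h ` {0..<card P} = P" using h by (rule bij_betw_imp_surj_on)
            ultimately obtain i where i: "i < card P" "h i = x'"
              by (metis atLeastLessThan_iff imageE)
            then show "x \<in> (\<Union>i<M * N. cball (h i) \<delta>)"
            proof -
              have "i < M * N" using i(1) cP by linarith
              moreover have "x \<in> cball (h i) \<delta>" using x'(1) i(2) by (simp add: dist_commute)
              ultimately show ?thesis by blast
            qed
          qed
        qed
      qed
    qed
  qed
  then show ?thesis by blast
qed

end
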